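(* For $n\ge 0$, the $(n+1)\times(n+1)$ Hankel matrix $M_n=\left[\binom{i+j}{n}\right]_{0\le i,j\le n}$ is invertible, with inverse $$M_n^{-1}=\left[(-1)^{n-i-j}\binom{n+1}{i+j+1}\right]_{0\le i,j\le n}.$$
   Context: Binomial coefficients $\binom{a}{b}$ with integers $a\ge0$ are taken to be $0$ when $b>a$ or $b<0$. *)

theory Defs
  imports Complex_Main "Jordan_Normal_Form.Matrix"
begin

definition hankel_binom :: "nat \<Rightarrow> rat mat" where
  "hankel_binom n = mat (n+1) (n+1) (\<lambda>(i,j). of_nat ((i+j) choose n))"

definition hankel_binom_inv :: "nat \<Rightarrow> rat mat" where
  "hankel_binom_inv n = mat (n+1) (n+1)
     (\<lambda>(i,j). (-1) powi (int n - int i - int j) * of_nat ((n+1) choose (i+j+1)))"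

end

theory Submission
  imports Defs
begin

lemma shift_alt:
  fixes f :: "nat \<Rightarrow> rat"
  shows "(\<Sum>m\<le>Suc N. (-1)^m * of_nat (Suc N choose m) * f m)
       = (\<Sum>m\<le>N. (-1)^m * of_nat (N choose m) * (f m - f (Suc m)))"
proof -
  define g where "g m = (-1)^m * of_nat (N choose m) * f m" for m
  have A: "(\<Sum>m\<le>N. g (Suc m)) = (\<Sum>m\<le>N. g m) - g 0"
  proof -
    have "(\<Sum>m\<le>Suc N. g m) = g 0 + (\<Sum>m\<le>N. g (Suc m))"
      by (rule sum.atMost_Suc_shift)
    moreover have "(\<Sum>m\<le>Suc N. g m) = (\<Sum>m\<le>N. g m)"
      by (simp add: g_def)
    ultimately show ?thesis by simp
  qed
  have "(\<Sum>m\<le>Suc N. (-1)^m * of_nat (Suc N choose m) * f m)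
      = f 0 + (\<Sum>m\<le>N. (-1)^(Suc m) * of_nat (Suc N choose Suc m) * f (Suc m))"
    by (subst sum.atMost_Suc_shift) simp
  also have "\<dots> = f 0 - (\<Sum>m\<le>N. (-1)^m * of_nat (N choose m) * f (Suc m)) + (\<Sum>m\<le>N. g (Suc m))"
    by (simp add: g_def sum.distrib sum_subtractf algebra_simps sum_negf)
  also have "\<dots> = (\<Sum>m\<le>N. (-1)^m * of_nat (N choose m) * (f m - f (Suc m)))"
    using A by (simp add: g_def sum_subtractf algebra_simps)
  finally show ?thesis .
qed

lemma P:
  "n < N \<Longrightarrow> (\<Sum>m\<le>N. (-1)^m * of_nat (N choose m) * of_nat ((a+m) choose n) :: rat) = 0"
proof (induction N arbitrary: n a)
  case 0 then show ?case by simp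
next
  case (Suc N)
  show ?case
  proof (cases n)
    case 0
    have "(\<Sum>m\<le>Suc N. (-1)^m * of_nat (Suc N choose m) :: rat) = 0"
      using choose_alternating_sum[of "Suc N"] by (simp add: mult.commute)
    then show ?thesis using 0 by simp
  next
    case (Suc n')
    have "n' < N" using Suc.prems Suc by simp
    have "(\<Sum>m\<le>Suc N. (-1)^m * of_nat (Suc N choose m) * of_nat ((a+m) choose n) :: rat)
        = (\<Sum>m\<le>N. (-1)^m * of_nat (N choose m) * (of_nat ((a+m) choose n) - of_nat ((a + Suc m) choose n)))"
      by (rule shift_alt)
    also have "\<dots> = - (\<Sum>m\<le>N. (-1)^m * of_nat (N choose m) * of_nat ((a+m) choose n'))"
      by (simp add: Suc sum_negf[symmetric] algebra_simps)
    also have "\<dots> = 0" using Suc.IH[OF \<open>n' < N\<close>] by simp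
    finally show ?thesis .
  qed
qed


lemma m1_par: assumes "a = b + 2*c" shows "(-1::rat)^a = (-1)^b"
proof -
  have "(-1::rat)^a = (-1)^b * ((-1)^2)^c" unfolding assms power_add power_mult ..
  then show ?thesis by simp
qed

lemma inv_m1: "inverse ((-1::rat)^k) = (-1)^k"
  by (metis inverse_minus_eq inverse_1 power_inverse)

lemma powi_m1: "(-1::rat) powi (int a - int b) = (-1)^(a+b)"
proof (cases "b \<le> a")
  case True
  then have e: "int a - int b = int (a - b)" by (subst of_nat_diff) auto
  have "(-1::rat)^(a+b) = (-1)^(a-b)"
    using True by (intro m1_par[where c=b]) simp
  then show ?thesis unfolding e power_int_of_nat by simp
next
  case False
  then have e: "int a - int b = - int (b - a)" by (subst of_nat_diff) auto
  have "(-1::rat)^(a+b) = (-1)^(b-a)"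
    using False by (intro m1_par[where c=a]) simp
  then show ?thesis unfolding e power_int_minus power_int_of_nat inv_m1 by simp
qed

lemma S:
  assumes "i \<le> n" "j \<le> n"
  shows "(\<Sum>k<Suc n. of_nat ((i+k) choose n) * ((-1) powi (int n - int k - int j) * of_nat ((n+1) choose (k+j+1))) :: rat)
     = (if i = j then 1 else 0)"
proof -
  have sg: "(-1::rat) powi (int n - int k - int j) = (-1)^(n+k+j)" for k
    using powi_m1[of n "k+j"] by (simp add: algebra_simps)
  define T :: "nat \<Rightarrow> rat" where "T k = of_nat ((i+k) choose n) * ((-1)^(n+k+j) * of_nat ((n+1) choose (k+j+1)))" for k
  have eq: "(\<Sum>k<Suc n. of_nat ((i+k) choose n) * ((-1) powi (int n - int k - int j) * of_nat ((n+1) choose (k+j+1))) :: rat)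
     = (\<Sum>k<Suc n. T k)" by (simp add: sg T_def)
  have z: "T k = 0" if "\<not> (n \<le> i + k \<and> k + j \<le> n)" for k
    using that by (auto simp: T_def binomial_eq_0)
  consider "i < j" | "i = j" | "j < i" by linarith
  then show ?thesis
  proof cases
    case 1
    then have "(\<Sum>k<Suc n. T k) = 0" by (intro sum.neutral) (auto intro!: z)
    then show ?thesis using 1 eq by simp
  next
    case 2
    have "(\<Sum>k<Suc n. T k) = T (n - i) + (\<Sum>k\<in>{..<Suc n} - {n-i}. T k)"
      by (rule sum.remove) auto
    also have "(\<Sum>k\<in>{..<Suc n} - {n-i}. T k) = 0"
      by (rule sum.neutral) (use 2 assms in \<open>auto intro!: z\<close>)
    also have "T (n - i) = 1"
    proof -
      have "(-1::rat)^(n + (n-i) + j) = (-1)^0" using 2 assms by (intro m1_par[where c=n]) auto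
      then show ?thesis using 2 assms by (simp add: T_def)
    qed
    finally show ?thesis using 2 eq by simp
  next
    case 3
    define a where "a = i - j - 1"
    define h :: "nat \<Rightarrow> rat" where "h m = (-1)^(n+1+m) * of_nat ((n+1) choose m) * of_nat ((a+m) choose n)" for m
    have Th: "T k = h (k + (j+1))" for k
    proof -
      have e1: "i + k = a + (k + (j+1))" using 3 by (simp add: a_def)
      have e3: "(-1::rat)^(n+1+(k+(j+1))) = (-1)^(n+k+j)" by (rule m1_par[where c=1]) simp
      have e2: "k + j + 1 = k + (j+1)" by simp
      show ?thesis unfolding T_def h_def e1 e2 e3 by (simp only: mult_ac)
    qed
    have "(\<Sum>k<Suc n. T k) = (\<Sum>k\<in>{0..<Suc n}. h (k + (j+1)))"
      by (simp add: Th atLeast0LessThan)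
    also have "\<dots> = (\<Sum>m\<in>{0+(j+1)..<Suc n+(j+1)}. h m)"
      by (rule sum.shift_bounds_nat_ivl[symmetric])
    also have "\<dots> = (\<Sum>m\<in>{..<Suc n+(j+1)}. h m)"
    proof (rule sum.mono_neutral_left)
      show "\<forall>m\<in>{..<Suc n+(j+1)} - {0+(j+1)..<Suc n+(j+1)}. h m = 0"
      proof
        fix m assume "m \<in> {..<Suc n+(j+1)} - {0+(j+1)..<Suc n+(j+1)}"
        then have "m < j + 1" by auto
        then have "a + m < n" using 3 assms by (simp add: a_def)
        then show "h m = 0" by (simp add: h_def binomial_eq_0)
      qed
    qed auto
    also have "\<dots> = (\<Sum>m\<in>{..Suc n}. h m)"
    proof (rule sum.mono_neutral_right)
      show "\<forall>m\<in>{..<Suc n+(j+1)} - {..Suc n}. h m = 0"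
      proof
        fix m assume "m \<in> {..<Suc n+(j+1)} - {..Suc n}"
        then have "n + 1 < m" by auto
        then show "h m = 0" by (simp add: h_def binomial_eq_0)
      qed
    qed auto
    also have "\<dots> = (-1)^(n+1) * (\<Sum>m\<le>Suc n. (-1)^m * of_nat (Suc n choose m) * of_nat ((a+m) choose n))"
      unfolding h_def sum_distrib_left by (rule sum.cong) (simp_all add: power_add mult_ac)
    also have "\<dots> = 0" using P[of n "Suc n" a] by simp
    finally show ?thesis using 3 eq by simp
  qed
qed


lemma MN: "hankel_binom n * hankel_binom_inv n = 1\<^sub>m (n+1)"
proof (rule eq_matI)
  fix i j assume ij: "i < dim_row (1\<^sub>m (n+1) :: rat mat)" "j < dim_col (1\<^sub>m (n+1) :: rat mat)"
  then have "i \<le> n" "j \<le> n" by auto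
  show "(hankel_binom n * hankel_binom_inv n) $$ (i, j) = 1\<^sub>m (n + 1) $$ (i, j)"
    using ij S[OF \<open>i \<le> n\<close> \<open>j \<le> n\<close>]
    by (simp add: hankel_binom_def hankel_binom_inv_def scalar_prod_def atLeast0LessThan)
qed (auto simp: hankel_binom_def hankel_binom_inv_def)

lemma NM: "hankel_binom_inv n * hankel_binom n = 1\<^sub>m (n+1)"
proof (rule eq_matI)
  fix i j assume ij: "i < dim_row (1\<^sub>m (n+1) :: rat mat)" "j < dim_col (1\<^sub>m (n+1) :: rat mat)"
  then have "i \<le> n" "j \<le> n" by auto
  have "(hankel_binom_inv n * hankel_binom n) $$ (i, j)
     = (\<Sum>k<Suc n. of_nat ((j+k) choose n) * ((-1) powi (int n - int k - int i) * of_nat ((n+1) choose (k+i+1))) :: rat)"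
    using ij by (simp add: hankel_binom_def hankel_binom_inv_def scalar_prod_def atLeast0LessThan
        algebra_simps)
  also have "\<dots> = 1\<^sub>m (n + 1) $$ (i, j)"
    using ij S[OF \<open>j \<le> n\<close> \<open>i \<le> n\<close>] by auto
  finally show "(hankel_binom_inv n * hankel_binom n) $$ (i, j) = 1\<^sub>m (n + 1) $$ (i, j)" .
qed (auto simp: hankel_binom_def hankel_binom_inv_def)

theorem lemma3p2:
  fixes n :: nat
  shows "invertible_mat (hankel_binom n)
    \<and> inverts_mat (hankel_binom n) (hankel_binom_inv n)
    \<and> inverts_mat (hankel_binom_inv n) (hankel_binom n)"
proof -
  have d: "dim_row (hankel_binom n) = n+1" "dim_col (hankel_binom n) = n+1"
    "dim_row (hankel_binom_inv n) = n+1"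
    by (auto simp: hankel_binom_def hankel_binom_inv_def)
  have a: "inverts_mat (hankel_binom n) (hankel_binom_inv n)"
    using MN d unfolding inverts_mat_def by simp
  have b: "inverts_mat (hankel_binom_inv n) (hankel_binom n)"
    using NM d unfolding inverts_mat_def by simp
  have "square_mat (hankel_binom n)" using d by simp
  then show ?thesis using a b unfolding invertible_mat_def by blast
qed

end
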